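(* Let $d\ge2$, $n\ge1$, $d\le t\le dn$, let $\gamma$ be a positive conductivity on the lattice graph below, fix $p\in L_t$, and let $M_p=\mathcal N(p)\cap(J_{t-1}^{\mathcal S}\cup L_{t-1}^{\mathcal S})$. Write $W=L_{t-1}^{\mathcal S}\cup J_{t-1}^{\mathcal S}$. Then: (i) the vectors $\{\mathbf v_q|_{W\setminus M_p}:q\in L_t^{\mathcal S}\setminus\{p\}\}$ are linearly independent; (ii) if $\mathbf w\in\operatorname{span}\{\mathbf v_q|_{W}:q\in L_t^{\mathcal S}\}$ is supported in $M_p$, then $\mathbf w=\alpha\,\mathbf v_p|_{W}$ for some $\alpha\in\mathbb R$.
   Context: Lattice: $D=\{x\in\mathbb Z^d:1\le x_i\le n\ \forall i\}$, $\partial D=\{p\in\mathbb Z^d:\min_{q\in D}\|q-p\|_{\ell^1}=1\}$; $E$ = unordered pairs $pq\subseteq D\cup\partial D$ with $\|p-q\|_{\ell^1}=1$, not both in $\partial D$; $\mathcal N(p)=\{q:pq\in E\}$. Conductivity $\gamma:E\to(0,\infty)$, symmetric. For $q\in D\cup\partial D$, $\mathbf v_q\in\mathbb R^{D\cup\partial D}$ has $(\mathbf v_q)_r=\gamma_{qr}$ for $r\in\mathcal N(q)$, $(\mathbf v_q)_q=-\sum_{r\in\mathcal N(q)}\gamma_{qr}$, and $0$ elsewhere. With $s(x)=\sum_ix_i$: $L_t=\{x\in D:s(x)=t\}$, $L_t^{\mathcal S}=\{x\in D:s(x)\le t\}$, $K_t^+=\{x\in\partial D:s(x)=t,\max_ix_i=n+1\}$,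 $K_t^-=\{x\in\partial D:s(x)=t,\min_ix_i=0\}$, $K_t^{\mathcal S\pm}=\bigcup_{\ell\le t}K_\ell^\pm$, $J_t^{\mathcal S}=K_t^{\mathcal S-}\cup K_{t+1}^{\mathcal S+}$. *)

theory Defs
  imports Complex_Main
begin

text \<open>Points of Z^d are represented as integer lists of length d.\<close>

definition l1dist :: "nat \<Rightarrow> int list \<Rightarrow> int list \<Rightarrow> int" where
  "l1dist d p q = (\<Sum>i<d. \<bar>p ! i - q ! i\<bar>)"

definition latD :: "nat \<Rightarrow> nat \<Rightarrow> int list set" where
  "latD d n = {x. length x = d \<and> (\<forall>i<d. 1 \<le> x ! i \<and> x ! i \<le> int n)}"

text \<open>Boundary: points at l1-distance exactly 1 from D (the minimum over D of the distance is 1).\<close>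
definition latB :: "nat \<Rightarrow> nat \<Rightarrow> int list set" where
  "latB d n = {p. length p = d \<and> (\<exists>q\<in>latD d n. l1dist d q p = 1)
                 \<and> (\<forall>q\<in>latD d n. 1 \<le> l1dist d q p)}"

definition latV :: "nat \<Rightarrow> nat \<Rightarrow> int list set" where
  "latV d n = latD d n \<union> latB d n"

definition edge :: "nat \<Rightarrow> nat \<Rightarrow> int list \<Rightarrow> int list \<Rightarrow> bool" where
  "edge d n p q \<longleftrightarrow> p \<in> latV d n \<and> q \<in> latV d n \<and> l1dist d p q = 1
                    \<and> \<not> (p \<in> latB d n \<and> q \<in> latB d n)"

definition nbhd :: "nat \<Rightarrow> nat \<Rightarrow> int list \<Rightarrow> int list set" where
  "nbhd d n p = {q. edge d n p q}"

definition conductivity :: "nat \<Rightarrow> nat \<Rightarrow> (int list \<Rightarrow> int list \<Rightarrow> real) \<Rightarrow> bool" where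
  "conductivity d n \<gamma> \<longleftrightarrow> (\<forall>p q. edge d n p q \<longrightarrow> 0 < \<gamma> p q \<and> \<gamma> p q = \<gamma> q p)"

text \<open>The vector v_q in R^(D \<union> \<partial>D), as a function (values outside D \<union> \<partial>D are 0).\<close>
definition vvec :: "nat \<Rightarrow> nat \<Rightarrow> (int list \<Rightarrow> int list \<Rightarrow> real) \<Rightarrow> int list \<Rightarrow> int list \<Rightarrow> real" where
  "vvec d n \<gamma> q r =
     (if r \<in> nbhd d n q then \<gamma> q r
      else if r = q then - (\<Sum>s\<in>nbhd d n q. \<gamma> q s)
      else 0)"

definition ssum :: "int list \<Rightarrow> int" where
  "ssum x = sum_list x"

definition layer :: "nat \<Rightarrow> nat \<Rightarrow> int \<Rightarrow> int list set" where
  "layer d n t = {x \<in> latD d n. ssum x = t}"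

definition layerS :: "nat \<Rightarrow> nat \<Rightarrow> int \<Rightarrow> int list set" where
  "layerS d n t = {x \<in> latD d n. ssum x \<le> t}"

definition Kplus :: "nat \<Rightarrow> nat \<Rightarrow> int \<Rightarrow> int list set" where
  "Kplus d n t = {x \<in> latB d n. ssum x = t \<and> Max (set x) = int n + 1}"

definition Kminus :: "nat \<Rightarrow> nat \<Rightarrow> int \<Rightarrow> int list set" where
  "Kminus d n t = {x \<in> latB d n. ssum x = t \<and> Min (set x) = 0}"

definition KplusS :: "nat \<Rightarrow> nat \<Rightarrow> int \<Rightarrow> int list set" where
  "KplusS d n t = (\<Union>l\<in>{l. l \<le> t}. Kplus d n l)"

definition KminusS :: "nat \<Rightarrow> nat \<Rightarrow> int \<Rightarrow> int list set" where
  "KminusS d n t = (\<Union>l\<in>{l. l \<le> t}. Kminus d n l)"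

definition JS :: "nat \<Rightarrow> nat \<Rightarrow> int \<Rightarrow> int list set" where
  "JS d n t = KminusS d n t \<union> KplusS d n (t + 1)"

definition lin_indep_restr :: "'a set \<Rightarrow> 'b set \<Rightarrow> ('a \<Rightarrow> 'b \<Rightarrow> real) \<Rightarrow> bool" where
  "lin_indep_restr Q S u \<longleftrightarrow>
     (\<forall>c. (\<forall>r\<in>S. (\<Sum>q\<in>Q. c q * u q r) = 0) \<longrightarrow> (\<forall>q\<in>Q. c q = 0))"

definition span_restr :: "'a set \<Rightarrow> 'b set \<Rightarrow> ('a \<Rightarrow> 'b \<Rightarrow> real) \<Rightarrow> ('b \<Rightarrow> real) set" where
  "span_restr Q S u = {w. \<exists>c. \<forall>r\<in>S. w r = (\<Sum>q\<in>Q. c q * u q r)}"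

end

theory Submission imports Defs begin

lemma ssum_nth: "ssum x = (\<Sum>i<length x. x ! i)"
  unfolding ssum_def by (simp add: sum_list_sum_nth atLeast0LessThan)

lemma finite_latD: "finite (latD d n)"
proof -
  have "latD d n \<subseteq> {xs. set xs \<subseteq> {1..int n} \<and> length xs = d}"
    unfolding latD_def by (auto simp: in_set_conv_nth)
  moreover have "finite {xs. set xs \<subseteq> {1..int n} \<and> length xs = d}"
    by (rule finite_lists_length_eq) simp
  ultimately show ?thesis by (rule finite_subset)
qed

lemma l1dist_self: "l1dist d q q = 0"
  unfolding l1dist_def by simp

lemma latD_not_latB: "q \<in> latD d n \<Longrightarrow> q \<notin> latB d n"
  unfolding latB_def using l1dist_self[of d q] by force

lemma dist1_char:
  assumes "l1dist d a b = 1"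
  shows "\<exists>k<d. \<exists>e::int. (e = 1 \<or> e = -1) \<and> (\<forall>i<d. b ! i = a ! i + (if i = k then e else 0))"
proof -
  have S: "(\<Sum>i<d. \<bar>a ! i - b ! i\<bar>) = 1" using assms unfolding l1dist_def by simp
  have "\<exists>k<d. a ! k \<noteq> b ! k"
  proof (rule ccontr)
    assume "\<not> ?thesis"
    then have "(\<Sum>i<d. \<bar>a ! i - b ! i\<bar>) = 0" by simp
    with S show False by simp
  qed
  then obtain k where k: "k < d" "a ! k \<noteq> b ! k" by blast
  have split: "(\<Sum>i<d. \<bar>a ! i - b ! i\<bar>) = \<bar>a ! k - b ! k\<bar> + (\<Sum>i\<in>{..<d}-{k}. \<bar>a ! i - b ! i\<bar>)"
    using k by (simp add: sum.remove)
  have nn: "(\<Sum>i\<in>{..<d}-{k}. \<bar>a ! i - b ! i\<bar>) \<ge> 0" by (simp add: sum_nonneg)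
  have "\<bar>a ! k - b ! k\<bar> \<ge> 1" using k by linarith
  then have ak: "\<bar>a ! k - b ! k\<bar> = 1" and rest: "(\<Sum>i\<in>{..<d}-{k}. \<bar>a ! i - b ! i\<bar>) = 0"
    using S split nn by linarith+
  have others: "\<forall>i\<in>{..<d}-{k}. \<bar>a ! i - b ! i\<bar> = 0"
    using rest by (subst (asm) sum_nonneg_eq_0_iff) auto
  show ?thesis
  proof (intro exI[of _ k] conjI exI[of _ "b ! k - a ! k"] allI impI)
    show "k < d" by fact
    show "b ! k - a ! k = 1 \<or> b ! k - a ! k = -1" using ak by linarith
    fix i assume "i < d"
    then show "b ! i = a ! i + (if i = k then b ! k - a ! k else 0)"
      using others by auto
  qed
qed

lemma sum_shift1:
  fixes f :: "nat \<Rightarrow> int"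
  assumes "k < d"
  shows "(\<Sum>i<d. f i + (if i = k then e else 0)) = (\<Sum>i<d. f i) + e"
  using assms by (simp add: sum.distrib)

lemma sq_shift:
  fixes f :: "nat \<Rightarrow> int"
  assumes "j < d" "k < d" "j \<noteq> k"
  shows "(\<Sum>i<d. (f i - (if i = j then 1 else 0) + (if i = k then 1 else 0))^2)
         = (\<Sum>i<d. (f i)^2) + 2 * (f k - f j) + 2"
proof -
  have pw: "(f i - (if i = j then 1 else 0) + (if i = k then 1 else 0))^2
      = (f i)^2 + (if i = j then 1 - 2 * f j else 0) + (if i = k then 2 * f k + 1 else 0)" for i
    using assms(3) by (auto simp: power2_eq_square algebra_simps)
  show ?thesis unfolding pw using assms by (simp add: sum.distrib)
qed

lemma mu_less:
  fixes a a0 b b0 K :: nat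
  assumes "a < a0 \<or> (a = a0 \<and> b < b0)" "b < K"
  shows "a * K + b < a0 * K + b0"
proof (cases "a < a0")
  case True
  then have "(a + 1) * K \<le> a0 * K" by (intro mult_le_mono1) simp
  then show ?thesis using assms(2) by (simp add: algebra_simps)
next
  case False
  then show ?thesis using assms by simp
qed

lemma main_indep:
  fixes d n :: nat and t :: int and \<gamma> :: "int list \<Rightarrow> int list \<Rightarrow> real" and p :: "int list"
    and c :: "int list \<Rightarrow> real"
  assumes d1: "1 \<le> d" and cond: "conductivity d n \<gamma>" and pD: "p \<in> latD d n" and ps: "ssum p = t"
    and eq: "\<forall>r \<in> (layerS d n (t-1) \<union> JS d n (t-1)) - nbhd d n p.
               (\<Sum>q\<in>layerS d n t - {p}. c q * vvec d n \<gamma> q r) = 0"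
  shows "\<forall>q \<in> layerS d n t - {p}. c q = 0"
proof -
  define F where "F = layerS d n t - {p}"
  define sq where "sq q = (\<Sum>i<d. (q ! i - p ! i)^2)" for q
  define B where "B = int d * (int n)^2"
  define K where "K = nat B + 1"
  define \<mu> where "\<mu> q = nat (ssum q) * K + nat (B - sq q)" for q
  have finF: "finite F" unfolding F_def layerS_def
    by (rule finite_subset[OF _ finite_latD[of d n]]) auto
  have lenp: "length p = d" using pD unfolding latD_def by simp
  have sqB: "0 \<le> sq q \<and> sq q \<le> B" if "q \<in> latD d n" for q
  proof -
    have "(q ! i - p ! i)^2 \<le> (int n)^2" if "i \<in> {..<d}" for i
    proof -
      have "1 \<le> q ! i" "q ! i \<le> int n" "1 \<le> p ! i" "p ! i \<le> int n"
        using \<open>q \<in> latD d n\<close> pD that unfolding latD_def by auto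
      then have "\<bar>q ! i - p ! i\<bar> \<le> int n" by linarith
      then have "\<bar>q ! i - p ! i\<bar>^2 \<le> (int n)^2" by (intro power_mono) auto
      then show ?thesis by simp
    qed
    then have "sq q \<le> of_nat (card {..<d}) * (int n)^2" unfolding sq_def by (rule sum_bounded_above)
    then show ?thesis unfolding sq_def B_def by (simp add: sum_nonneg)
  qed
  have ssum_nn: "0 \<le> ssum q" if "q \<in> latD d n" for q
    using that unfolding latD_def ssum_nth by (auto intro!: sum_nonneg)
  have mu_lt: "\<mu> q' < \<mu> q" if "q \<in> latD d n" "q' \<in> latD d n"
    "ssum q' < ssum q \<or> (ssum q' = ssum q \<and> sq q < sq q')" for q q'
  proof -
    have A: "nat (ssum q') < nat (ssum q) \<or> (nat (ssum q') = nat (ssum q) \<and> nat (B - sq q') < nat (B - sq q))"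
      using that sqB[OF that(1)] sqB[OF that(2)] ssum_nn[OF that(1)] ssum_nn[OF that(2)] by auto
    have "nat (B - sq q') < K" using sqB[OF that(2)] unfolding K_def by auto
    then show ?thesis unfolding \<mu>_def using mu_less[OF A] by blast
  qed
  have "c q = 0" if "q \<in> F" for q
    using that
  proof (induction q rule: measure_induct_rule[of \<mu>])
    case (less q)
    have qD: "q \<in> latD d n" and qs: "ssum q \<le> t" and qp: "q \<noteq> p"
      using less.prems unfolding F_def layerS_def by auto
    have lenq: "length q = d" using qD unfolding latD_def by simp
    define \<delta> where "\<delta> i = q ! i - p ! i" for i
    obtain j where j: "j < d" "\<forall>i<d. \<delta> j \<le> \<delta> i"
    proof -
      have ne: "\<delta> ` {..<d} \<noteq> {}" using d1 by (auto simp: lessThan_empty_iff)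
      have "Min (\<delta> ` {..<d}) \<in> \<delta> ` {..<d}" using ne by (intro Min_in) auto
      then obtain j where "j < d" "\<delta> j = Min (\<delta> ` {..<d})" by auto
      moreover have "\<forall>i<d. Min (\<delta> ` {..<d}) \<le> \<delta> i" by (intro allI impI Min_le) auto
      ultimately show ?thesis using that by auto
    qed
    define r where "r = q[j := q ! j - 1]"
    have lenr: "length r = d" unfolding r_def using lenq by simp
    have rn: "\<forall>i<d. r ! i = q ! i + (if i = j then -1 else 0)"
      unfolding r_def using lenq by auto
    have rsum: "ssum r = ssum q - 1"
      unfolding ssum_nth lenr lenq using rn sum_shift1[OF j(1), of "\<lambda>i. q ! i" "-1"] by simp
    have dqr: "l1dist d q r = 1"
    proof -
      have "(\<Sum>i<d. \<bar>q ! i - r ! i\<bar>) = (\<Sum>i<d. (if i = j then 1 else 0))"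
        using rn by (intro sum.cong) auto
      then show ?thesis unfolding l1dist_def using j(1) by simp
    qed
    have rW: "r \<in> layerS d n (t-1) \<union> JS d n (t-1)"
    proof (cases "q ! j \<ge> 2")
      case True
      then have "r \<in> latD d n" using qD rn lenr unfolding latD_def by auto
      then show ?thesis unfolding layerS_def using rsum qs by auto
    next
      case False
      then have qj: "q ! j = 1" using qD j(1) unfolding latD_def by force
      have rB: "r \<in> latB d n" unfolding latB_def
      proof (intro CollectI conjI bexI[of _ q] ballI)
        show "length r = d" by fact
        show "l1dist d q r = 1" by fact
        show "q \<in> latD d n" by fact
        fix y assume "y \<in> latD d n"
        then have "1 \<le> \<bar>y ! j - r ! j\<bar>" using rn qj j(1) unfolding latD_def by auto
        also have "\<dots> \<le> (\<Sum>i<d. \<bar>y ! i - r ! i\<bar>)"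
          using j(1) by (intro member_le_sum) auto
        finally show "1 \<le> l1dist d y r" unfolding l1dist_def .
      qed
      have "Min (set r) = 0"
      proof (rule Min_eqI)
        show "finite (set r)" by simp
        have "r ! j = 0" using rn qj j(1) by simp
        then show "0 \<in> set r" using lenr j(1) by (metis nth_mem)
        fix y assume "y \<in> set r"
        then obtain i where "i < d" "y = r ! i" using lenr by (auto simp: in_set_conv_nth)
        then show "0 \<le> y" using rn qD unfolding latD_def by (cases "i = j") auto
      qed
      then have "r \<in> Kminus d n (ssum r)" unfolding Kminus_def using rB by simp
      then have "r \<in> KminusS d n (t-1)" unfolding KminusS_def using rsum qs by (intro UN_I[where a="ssum q - 1"]) auto
      then show ?thesis unfolding JS_def by auto
    qed
    have rM: "r \<notin> nbhd d n p"
    proof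
      assume "r \<in> nbhd d n p"
      then have "l1dist d p r = 1" unfolding nbhd_def edge_def by auto
      from dist1_char[OF this] obtain k e where k: "k < d" "e = 1 \<or> e = -1"
        "\<forall>i<d. r ! i = p ! i + (if i = k then e else 0)" by blast
      have "ssum r = ssum p + e"
        unfolding ssum_nth lenr lenp using k(3) sum_shift1[OF k(1), of "\<lambda>i. p ! i" e] by simp
      then have e: "e = -1" and qt: "ssum q = t" using rsum qs ps k(2) by auto
      have qpi: "\<forall>i<d. q ! i + (if i = j then -1 else 0) = p ! i + (if i = k then -1 else 0)"
        using rn k(3) e by auto
      show False
      proof (cases "k = j")
        case True
        then have "\<forall>i<d. q ! i = p ! i" using qpi by auto
        then have "q = p" using lenq lenp by (intro nth_equalityI) auto
        then show False using qp by simp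
      next
        case False
        have "q ! j + (if j = j then -1 else 0) = p ! j + (if j = k then -1 else 0)" using qpi j(1) by blast
        then have "\<delta> j = 1" using False unfolding \<delta>_def by simp
        then have "\<forall>i<d. 1 \<le> \<delta> i" using j(2) by auto
        then have "(\<Sum>i<d. (1::int)) \<le> (\<Sum>i<d. \<delta> i)" by (intro sum_mono) auto
        moreover have "(\<Sum>i<d. \<delta> i) = ssum q - ssum p"
          unfolding \<delta>_def ssum_nth lenq lenp by (simp add: sum_subtractf)
        ultimately show False using qt ps d1 by simp
      qed
    qed
    have eqr: "(\<Sum>q'\<in>F. c q' * vvec d n \<gamma> q' r) = 0" using eq rW rM unfolding F_def by blast
    have others: "c q' * vvec d n \<gamma> q' r = 0" if q'F: "q' \<in> F - {q}" for q'
    proof (cases "vvec d n \<gamma> q' r = 0")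
      case True then show ?thesis by simp
    next
      case False
      have q'D: "q' \<in> latD d n" using q'F unfolding F_def layerS_def by auto
      have lenq': "length q' = d" using q'D unfolding latD_def by simp
      have "\<mu> q' < \<mu> q"
      proof (cases "r = q'")
        case True
        then show ?thesis using mu_lt[OF qD q'D] rsum by auto
      next
        case False
        with \<open>vvec d n \<gamma> q' r \<noteq> 0\<close> have "r \<in> nbhd d n q'" unfolding vvec_def by (auto split: if_splits)
        then have "l1dist d q' r = 1" unfolding nbhd_def edge_def by auto
        from dist1_char[OF this] obtain k e where k: "k < d" "e = 1 \<or> e = -1"
          "\<forall>i<d. r ! i = q' ! i + (if i = k then e else 0)" by blast
        have q'i: "\<forall>i<d. q' ! i = q ! i + (if i = j then -1 else 0) - (if i = k then e else 0)"
          using rn k(3) by auto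
        have "ssum r = ssum q' + e"
          unfolding ssum_nth lenr lenq' using k(3) sum_shift1[OF k(1), of "\<lambda>i. q' ! i" e] by simp
        then have s': "ssum q' = ssum q - 1 - e" using rsum by simp
        show ?thesis
        proof (cases "e = 1")
          case True
          then show ?thesis using mu_lt[OF qD q'D] s' by auto
        next
          case False
          then have e: "e = -1" using k(2) by simp
          have kj: "k \<noteq> j"
          proof
            assume "k = j"
            then have "\<forall>i<d. q' ! i = q ! i" using q'i e by auto
            then have "q' = q" using lenq lenq' by (intro nth_equalityI) auto
            then show False using q'F by simp
          qed
          have "sq q' = (\<Sum>i<d. (\<delta> i - (if i = j then 1 else 0) + (if i = k then 1 else 0))^2)"
            unfolding sq_def
          proof (intro sum.cong refl)
            fix i assume "i \<in> {..<d}"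
            then have "q' ! i = q ! i + (if i = j then - 1 else 0) - (if i = k then - 1 else 0)"
              using q'i e by auto
            then have "q' ! i - p ! i = \<delta> i - (if i = j then 1 else 0) + (if i = k then 1 else 0)"
              unfolding \<delta>_def by (auto split: if_splits)
            then show "(q' ! i - p ! i)^2 = (\<delta> i - (if i = j then 1 else 0) + (if i = k then 1 else 0))^2"
              by simp
          qed
          also have "\<dots> = sq q + 2 * (\<delta> k - \<delta> j) + 2"
            using sq_shift[OF j(1) k(1) kj[symmetric], of \<delta>] unfolding sq_def \<delta>_def by simp
          finally have "sq q < sq q'" using j(2) k(1) by auto
          then show ?thesis using mu_lt[OF qD q'D] s' e by auto
        qed
      qed
      then have "c q' = 0" using less.IH q'F by blast
      then show ?thesis by simp
    qed
    have "(\<Sum>q'\<in>F. c q' * vvec d n \<gamma> q' r) = c q * vvec d n \<gamma> q r + (\<Sum>q'\<in>F - {q}. c q' * vvec d n \<gamma> q' r)"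
      using finF less.prems by (simp add: sum.remove)
    also have "(\<Sum>q'\<in>F - {q}. c q' * vvec d n \<gamma> q' r) = 0" using others by (intro sum.neutral) blast
    finally have cq: "c q * vvec d n \<gamma> q r = 0" using eqr by simp
    have edge: "edge d n q r"
    proof -
      have "r \<in> latV d n" using rW unfolding latV_def layerS_def JS_def KminusS_def KplusS_def Kminus_def Kplus_def by auto
      moreover have "q \<in> latV d n" using qD unfolding latV_def by simp
      ultimately show ?thesis unfolding edge_def using dqr latD_not_latB[OF qD] by simp
    qed
    then have "vvec d n \<gamma> q r = \<gamma> q r" unfolding vvec_def nbhd_def by simp
    moreover have "\<gamma> q r > 0" using cond edge unfolding conductivity_def by blast
    ultimately show ?case using cq by simp
  qed
  then show ?thesis unfolding F_def by blast
qed

theorem corollary3p5: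
  fixes d n :: nat and t :: int and \<gamma> :: "int list \<Rightarrow> int list \<Rightarrow> real" and p :: "int list"
  assumes "2 \<le> d" and "1 \<le> n" and "int d \<le> t" and "t \<le> int d * int n"
    and "conductivity d n \<gamma>"
    and "p \<in> layer d n t"
  defines "M \<equiv> nbhd d n p \<inter> (JS d n (t - 1) \<union> layerS d n (t - 1))"
    and "W \<equiv> layerS d n (t - 1) \<union> JS d n (t - 1)"
  shows "lin_indep_restr (layerS d n t - {p}) (W - M) (vvec d n \<gamma>)
     \<and> (\<forall>w \<in> span_restr (layerS d n t) W (vvec d n \<gamma>).
          (\<forall>r \<in> W - M. w r = 0) \<longrightarrow> (\<exists>\<alpha>::real. \<forall>r\<in>W. w r = \<alpha> * vvec d n \<gamma> p r))"
proof -
  have d1: "1 \<le> d" using assms(1) by simp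
  have pD: "p \<in> latD d n" and ps: "ssum p = t" using assms(6) unfolding layer_def by auto
  have WM: "W - M = (layerS d n (t-1) \<union> JS d n (t-1)) - nbhd d n p"
    unfolding M_def W_def by auto
  define L where "L = layerS d n t"
  have finL: "finite L" unfolding L_def layerS_def
    by (rule finite_subset[OF _ finite_latD[of d n]]) auto
  have pL: "p \<in> L" unfolding L_def layerS_def using pD ps by simp
  have P1: "lin_indep_restr (layerS d n t - {p}) (W - M) (vvec d n \<gamma>)"
    unfolding lin_indep_restr_def
  proof (intro allI impI)
    fix c :: "int list \<Rightarrow> real"
    assume "\<forall>r\<in>W - M. (\<Sum>q\<in>layerS d n t - {p}. c q * vvec d n \<gamma> q r) = 0"
    then show "\<forall>q\<in>layerS d n t - {p}. c q = 0"
      using main_indep[OF d1 assms(5) pD ps, of c] unfolding WM by blast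
  qed
  have P2: "\<exists>\<alpha>::real. \<forall>r\<in>W. w r = \<alpha> * vvec d n \<gamma> p r"
    if wS: "w \<in> span_restr (layerS d n t) W (vvec d n \<gamma>)" and w0: "\<forall>r \<in> W - M. w r = 0" for w
  proof -
    obtain c where c: "\<forall>r\<in>W. w r = (\<Sum>q\<in>L. c q * vvec d n \<gamma> q r)"
      using wS unfolding span_restr_def L_def by blast
    have split: "(\<Sum>q\<in>L. c q * vvec d n \<gamma> q r) = c p * vvec d n \<gamma> p r + (\<Sum>q\<in>L - {p}. c q * vvec d n \<gamma> q r)" for r
      using finL pL by (simp add: sum.remove)
    have pW: "p \<notin> W"
    proof
      assume "p \<in> W"
      moreover have "p \<notin> layerS d n (t-1)" unfolding layerS_def using ps by simp
      moreover have "p \<notin> JS d n (t-1)" using latD_not_latB[OF pD]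
        unfolding JS_def KminusS_def KplusS_def Kminus_def Kplus_def by auto
      ultimately show False unfolding W_def by auto
    qed
    have vp0: "vvec d n \<gamma> p r = 0" if "r \<in> W - M" for r
    proof -
      have "r \<notin> nbhd d n p" using that unfolding M_def W_def by auto
      moreover have "r \<noteq> p" using that pW by auto
      ultimately show ?thesis unfolding vvec_def by simp
    qed
    have "\<forall>r\<in>W - M. (\<Sum>q\<in>layerS d n t - {p}. c q * vvec d n \<gamma> q r) = 0"
    proof
      fix r assume r: "r \<in> W - M"
      then have "w r = (\<Sum>q\<in>L. c q * vvec d n \<gamma> q r)" using c by auto
      then show "(\<Sum>q\<in>layerS d n t - {p}. c q * vvec d n \<gamma> q r) = 0"
        using w0 r vp0[OF r] split[of r] unfolding L_def by simp
    qed
    then have c0: "\<forall>q\<in>L - {p}. c q = 0"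
      using main_indep[OF d1 assms(5) pD ps, of c] unfolding WM L_def by blast
    show ?thesis
    proof (intro exI[of _ "c p"] ballI)
      fix r assume "r \<in> W"
      then have "w r = c p * vvec d n \<gamma> p r + (\<Sum>q\<in>L - {p}. c q * vvec d n \<gamma> q r)"
        using c split by simp
      also have "(\<Sum>q\<in>L - {p}. c q * vvec d n \<gamma> q r) = 0" using c0 by simp
      finally show "w r = c p * vvec d n \<gamma> p r" by simp
    qed
  qed
  show ?thesis using P1 P2 by blast
qed

end
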